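(* Let $a>b>0$ and let $E$ be the ellipse $\frac{x^2}{a^2}+\frac{y^2}{b^2}=1$. Put $\delta=\sqrt{a^4-a^2b^2+b^4}$. Then for every 3-periodic billiard orbit (triangle) $P_1P_2P_3$ in $E$, the ratio of its inradius $r$ to its circumradius $R$ is the same, namely \[ \frac{r}{R}=\frac{2(\delta-b^2)(a^2-\delta)}{(a^2-b^2)^2}. \]
   Context: A 3-periodic billiard orbit in the ellipse $E$ is a nondegenerate triangle $P_1P_2P_3$ with all vertices on $E$ such that at each vertex $P_i$ the normal line to $E$ at $P_i$ bisects the interior angle of the triangle at $P_i$ (equal angles of incidence and reflection). These orbits form a one-parameter family (one through every point of $E$). The inradius and circumradius are the radii of the incircle and circumcircle of the triangle. *)

theory Defs
  imports "HOL-Analysis.Analysis"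
begin

type_synonym pt = "real \<times> real"

definition on_ellipse :: "real \<Rightarrow> real \<Rightarrow> pt \<Rightarrow> bool" where
  "on_ellipse a b P \<longleftrightarrow> (fst P)^2 / a^2 + (snd P)^2 / b^2 = 1"

text \<open>Normal vector to the ellipse at P (gradient of the defining function, up to factor 2).\<close>
definition ellipse_normal :: "real \<Rightarrow> real \<Rightarrow> pt \<Rightarrow> pt" where
  "ellipse_normal a b P = (fst P / a^2, snd P / b^2)"

definition nondegenerate_triangle :: "pt \<Rightarrow> pt \<Rightarrow> pt \<Rightarrow> bool" where
  "nondegenerate_triangle P Q R \<longleftrightarrow> \<not> collinear {P, Q, R}"

text \<open>The normal line at P bisects the interior angle QPR: the interior bisector direction
  (sum of unit vectors from P towards Q and R) is parallel to the normal.\<close>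
definition normal_bisects :: "real \<Rightarrow> real \<Rightarrow> pt \<Rightarrow> pt \<Rightarrow> pt \<Rightarrow> bool" where
  "normal_bisects a b P Q R \<longleftrightarrow>
     (\<exists>t. (Q - P) /\<^sub>R norm (Q - P) + (R - P) /\<^sub>R norm (R - P) = t *\<^sub>R ellipse_normal a b P)"

definition billiard3 :: "real \<Rightarrow> real \<Rightarrow> pt \<Rightarrow> pt \<Rightarrow> pt \<Rightarrow> bool" where
  "billiard3 a b P1 P2 P3 \<longleftrightarrow>
     nondegenerate_triangle P1 P2 P3 \<and>
     on_ellipse a b P1 \<and> on_ellipse a b P2 \<and> on_ellipse a b P3 \<and>
     normal_bisects a b P1 P2 P3 \<and> normal_bisects a b P2 P3 P1 \<and> normal_bisects a b P3 P1 P2"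

definition tri_area :: "pt \<Rightarrow> pt \<Rightarrow> pt \<Rightarrow> real" where
  "tri_area P Q R = \<bar>(fst Q - fst P) * (snd R - snd P) - (fst R - fst P) * (snd Q - snd P)\<bar> / 2"

definition inradius :: "pt \<Rightarrow> pt \<Rightarrow> pt \<Rightarrow> real" where
  "inradius P Q R = 2 * tri_area P Q R / (dist P Q + dist Q R + dist R P)"

definition circumradius :: "pt \<Rightarrow> pt \<Rightarrow> pt \<Rightarrow> real" where
  "circumradius P Q R = dist P Q * dist Q R * dist R P / (4 * tri_area P Q R)"

end

theory Submission
  imports Defs
begin


lemma noncollinear_cross:
  fixes x1 y1 x2 y2 x3 y3 :: real
  assumes "\<not> collinear {(x1,y1),(x2,y2),(x3,y3)}"
  shows "(x2-x1)*(y3-y1) - (x3-x1)*(y2-y1) \<noteq> 0"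
proof
  assume h: "(x2-x1)*(y3-y1) - (x3-x1)*(y2-y1) = 0"
  have "collinear {(x1,y1),(x2,y2),(x3,y3)}"
  proof (cases "(x1,y1) = (x3,y3)")
    case True then show ?thesis unfolding collinear_3_expand by blast
  next
    case False
    define w1 where "w1 = x1-x3"
    define w2 where "w2 = y1-y3"
    have wn: "w1^2+w2^2 \<noteq> 0" using False unfolding w1_def w2_def
      by (auto simp: sum_power2_eq_zero_iff)
    define u where "u = ((x2-x3)*w1+(y2-y3)*w2)/(w1^2+w2^2)"
    have e1: "x2 = u*x1 + (1-u)*x3"
    proof -
      have "(x2-x3)*(w1^2+w2^2) = ((x2-x3)*w1+(y2-y3)*w2)*w1"
        using h unfolding w1_def w2_def by algebra
      then have "x2 - x3 = u*w1" unfolding u_def using wn by (simp add: field_simps)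
      then show ?thesis unfolding w1_def by algebra
    qed
    have e2: "y2 = u*y1 + (1-u)*y3"
    proof -
      have "(y2-y3)*(w1^2+w2^2) = ((x2-x3)*w1+(y2-y3)*w2)*w2"
        using h unfolding w1_def w2_def by algebra
      then have "y2 - y3 = u*w2" unfolding u_def using wn by (simp add: field_simps)
      then show ?thesis unfolding w2_def by algebra
    qed
    show ?thesis unfolding collinear_3_expand using e1 e2 by auto
  qed
  then show False using assms by simp
qed

lemma vertex:
  fixes ua ub wa wb n1 n2 t :: real
  assumes u: "ua^2+ub^2 = 1" and v: "wa^2+wb^2=1" and cr: "ua*wb - ub*wa \<noteq> 0"
    and e1: "ua+wa = t*n1" and e2: "ub+wb = t*n2"
  shows "ua*n1+ub*n2 = wa*n1+wb*n2"
    and "ua*wa+ub*wb = 2*(ua*n1+ub*n2)^2/(n1^2+n2^2) - 1"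
proof -
  have t0: "t \<noteq> 0"
  proof
    assume "t = 0"
    then have "wa = -ua" "wb = -ub" using e1 e2 by auto
    then show False using cr by (simp add: algebra_simps)
  qed
  have a1: "1 + (ua*wa+ub*wb) = t*(ua*n1+ub*n2)"
    using u e1 e2 by algebra
  have a2: "1 + (ua*wa+ub*wb) = t*(wa*n1+wb*n2)"
    using v e1 e2 by algebra
  show "ua*n1+ub*n2 = wa*n1+wb*n2" using a1 a2 t0 by simp
  have a3: "2 + 2*(ua*wa+ub*wb) = t^2*(n1^2+n2^2)"
    using u v e1 e2 by algebra
  have a4: "t*(n1^2+n2^2) = 2*(ua*n1+ub*n2)"
  proof -
    have "t*(t*(n1^2+n2^2)) = t*(2*(ua*n1+ub*n2))" using a1 a3 by algebra
    then show ?thesis using t0 by simp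
  qed
  have N0: "n1^2+n2^2 \<noteq> 0"
  proof
    assume "n1^2+n2^2 = 0"
    then have "n1 = 0" "n2 = 0" by (simp_all add: sum_power2_eq_zero_iff)
    then have "wa = -ua" "wb = -ub" using e1 e2 by auto
    then show False using cr by (simp add: algebra_simps)
  qed
  have "t = 2*(ua*n1+ub*n2)/(n1^2+n2^2)" using a4 N0 by (simp add: field_simps)
  moreover have "ua*wa+ub*wb = t*(ua*n1+ub*n2) - 1" using a1 by simp
  ultimately show "ua*wa+ub*wb = 2*(ua*n1+ub*n2)^2/(n1^2+n2^2) - 1"
    by (simp add: power2_eq_square)
qed

lemma tri_ratio:
  fixes p q w cr d1 d2 d3 :: real
  assumes "p > 0" "q > 0" "w > 0"
    "d1 = (p^2+w^2-q^2)/2" "d2 = (p^2+q^2-w^2)/2" "d3 = (q^2+w^2-p^2)/2"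
    "4*cr^2 = (p+q+w)*(-p+q+w)*(p-q+w)*(p+q-w)" "cr \<noteq> 0"
  shows "(2*(\<bar>cr\<bar>/2)/(p+q+w)) / (p*q*w/(4*(\<bar>cr\<bar>/2))) = d1/(p*w) + d2/(p*q) + d3/(q*w) - 1"
proof -
  have S: "p+q+w > 0" using assms by simp
  have cr2: "cr^2 = (p+q+w)*((-p+q+w)*(p-q+w)*(p+q-w))/4" using assms(7) by simp
  have "(2*(\<bar>cr\<bar>/2)/(p+q+w)) / (p*q*w/(4*(\<bar>cr\<bar>/2))) = 2*cr^2/((p+q+w)*(p*q*w))"
    using assms by (simp add: field_simps power2_eq_square)
  also have "\<dots> = (-p+q+w)*(p-q+w)*(p+q-w)/(2*p*q*w)"
  proof -
    have g: "2*(SS*X/4)/(SS*P) = X/(2*P)" if "SS \<noteq> 0" for SS X P :: real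
      using that by (simp add: field_simps)
    show ?thesis unfolding cr2 using g[of "p+q+w"] S by (simp add: mult.assoc)
  qed
  also have "\<dots> = d1/(p*w) + d2/(p*q) + d3/(q*w) - 1"
  proof -
    have e1: "d1/(p*w) + d2/(p*q) + d3/(q*w) - 1 = (d1*q + d2*w + d3*p - p*q*w)/(p*q*w)"
      using assms(1-3) by (simp add: field_simps)
    have e2: "d1*q + d2*w + d3*p - p*q*w = (-p+q+w)*(p-q+w)*(p+q-w)/2"
      unfolding assms(4,5,6) by algebra
    show ?thesis unfolding e1 e2 by simp
  qed
  finally show ?thesis .
qed
lemma vertex_pt:
  fixes a b x y xq yq xr yr :: real
  assumes nb: "normal_bisects a b (x,y) (xq,yq) (xr,yr)"
    and cr: "(xq-x)*(yr-y) - (xr-x)*(yq-y) \<noteq> 0"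
  defines "dq \<equiv> sqrt((xq-x)^2+(yq-y)^2)" and "dr \<equiv> sqrt((xr-x)^2+(yr-y)^2)"
  shows "((xq-x)*(x/a^2)+(yq-y)*(y/b^2))/dq = ((xr-x)*(x/a^2)+(yr-y)*(y/b^2))/dr"
    and "((xq-x)*(xr-x)+(yq-y)*(yr-y))/(dq*dr) = 2*(((xq-x)*(x/a^2)+(yq-y)*(y/b^2))/dq)^2/((x/a^2)^2+(y/b^2)^2) - 1"
proof -
  have dq0: "dq > 0"
  proof -
    have "(xq-x)^2+(yq-y)^2 \<noteq> 0" using cr by (auto simp: sum_power2_eq_zero_iff)
    then have "(xq-x)^2+(yq-y)^2 > 0" by (simp add: add_pos_nonneg order_le_neq_trans)
    then show ?thesis unfolding dq_def by simp
  qed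
  have dr0: "dr > 0"
  proof -
    have "(xr-x)^2+(yr-y)^2 \<noteq> 0" using cr by (auto simp: sum_power2_eq_zero_iff)
    then have "(xr-x)^2+(yr-y)^2 > 0" by (simp add: add_pos_nonneg order_le_neq_trans)
    then show ?thesis unfolding dr_def by simp
  qed
  have dq2: "dq^2 = (xq-x)^2+(yq-y)^2" unfolding dq_def by simp
  have dr2: "dr^2 = (xr-x)^2+(yr-y)^2" unfolding dr_def by simp
  obtain t where t: "((xq,yq) - (x,y)) /\<^sub>R norm ((xq,yq) - (x,y)) + ((xr,yr) - (x,y)) /\<^sub>R norm ((xr,yr) - (x,y))
     = t *\<^sub>R ellipse_normal a b (x,y)"
    using nb unfolding normal_bisects_def by blast
  have nq: "norm ((xq,yq) - (x,y)) = dq" unfolding dq_def by (simp add: norm_Pair)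
  have nr: "norm ((xr,yr) - (x,y)) = dr" unfolding dr_def by (simp add: norm_Pair)
  have e1: "(xq-x)/dq + (xr-x)/dr = t*(x/a^2)" and e2: "(yq-y)/dq + (yr-y)/dr = t*(y/b^2)"
    using t unfolding nq nr ellipse_normal_def by (simp_all add: divide_inverse_commute)
  have u1: "((xq-x)/dq)^2 + ((yq-y)/dq)^2 = 1"
  proof -
    have "((xq-x)/dq)^2 + ((yq-y)/dq)^2 = ((xq-x)^2+(yq-y)^2)/dq^2" by (simp add: power_divide add_divide_distrib)
    also have "\<dots> = 1" using dq0 dq2 by (metis less_numeral_extra(3) divide_self zero_less_power)
    finally show ?thesis .
  qed
  have u2: "((xr-x)/dr)^2 + ((yr-y)/dr)^2 = 1"
  proof -
    have "((xr-x)/dr)^2 + ((yr-y)/dr)^2 = ((xr-x)^2+(yr-y)^2)/dr^2" by (simp add: power_divide add_divide_distrib)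
    also have "\<dots> = 1" using dr0 dr2 by (metis less_numeral_extra(3) divide_self zero_less_power)
    finally show ?thesis .
  qed
  have c2: "((xq-x)/dq)*((yr-y)/dr) - ((yq-y)/dq)*((xr-x)/dr) \<noteq> 0"
  proof -
    have "((xq-x)/dq)*((yr-y)/dr) - ((yq-y)/dq)*((xr-x)/dr) = ((xq-x)*(yr-y) - (xr-x)*(yq-y))/(dq*dr)"
      using dq0 dr0 by (simp add: field_simps)
    then show ?thesis using cr dq0 dr0 by simp
  qed
  note V = vertex[OF u1 u2 c2 e1 e2]
  have lin: "(p*n1+q*n2)/d = (p/d)*n1 + (q/d)*n2" for p q d n1 n2 :: real
    by (simp add: add_divide_distrib)
  show "((xq-x)*(x/a^2)+(yq-y)*(y/b^2))/dq = ((xr-x)*(x/a^2)+(yr-y)*(y/b^2))/dr"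
    using V(1) unfolding lin by simp
  have "((xq-x)*(xr-x)+(yq-y)*(yr-y))/(dq*dr) = ((xq-x)/dq)*((xr-x)/dr) + ((yq-y)/dq)*((yr-y)/dr)"
    using dq0 dr0 by (simp add: field_simps)
  also have "\<dots> = 2*(((xq-x)*(x/a^2)+(yq-y)*(y/b^2))/dq)^2/((x/a^2)^2+(y/b^2)^2) - 1"
    unfolding V(2) lin by simp
  finally show "((xq-x)*(xr-x)+(yq-y)*(yr-y))/(dq*dr) = 2*(((xq-x)*(x/a^2)+(yq-y)*(y/b^2))/dq)^2/((x/a^2)^2+(y/b^2)^2) - 1" .
qed

lemma det3:
  fixes c1 z1 c2 z2 c3 z3 k g :: real
  assumes 
  "(k-1)*c1*c2 - (k+1)*z1*z2 = g"
  "(k-1)*c1*c3 - (k+1)*z1*z3 = g"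
  "(k-1)*c3*c2 - (k+1)*z3*z2 = g"
  shows "((k-1)*c1^2-(k+1)*z1^2-g)*((k-1)*c2^2-(k+1)*z2^2-g)*((k-1)*c3^2-(k+1)*z3^2-g)
    + g*(((k-1)*c1^2-(k+1)*z1^2-g)*((k-1)*c2^2-(k+1)*z2^2-g) + ((k-1)*c1^2-(k+1)*z1^2-g)*((k-1)*c3^2-(k+1)*z3^2-g)
     + ((k-1)*c2^2-(k+1)*z2^2-g)*((k-1)*c3^2-(k+1)*z3^2-g)) = 0"
proof -
  define W where "W = (\<lambda>c z c' z'. (k-1)*c*c' - (k+1)*z*z')"
  have d: "W c1 z1 c1 z1 * W c2 z2 c2 z2 * W c3 z3 c3 z3 + 2 * W c1 z1 c2 z2 * W c1 z1 c3 z3 * W c3 z3 c2 z2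
     - W c1 z1 c1 z1 * (W c3 z3 c2 z2)^2 - W c2 z2 c2 z2 * (W c1 z1 c3 z3)^2 - W c3 z3 c3 z3 * (W c1 z1 c2 z2)^2 = 0"
    unfolding W_def by algebra
  have e: "W c1 z1 c2 z2 = g" "W c1 z1 c3 z3 = g" "W c3 z3 c2 z2 = g" using assms unfolding W_def by auto
  have f: "W c z c z = (k-1)*c^2-(k+1)*z^2" for c z unfolding W_def by (simp add: power2_eq_square)
  show ?thesis using d unfolding e f by algebra
qed

lemma pair:
  fixes c1 z1 c2 z2 A B j :: real
  assumes "c1^2+z1^2=1" "c2^2+z2^2=1" "(c1,z1) \<noteq> (c2,z2)"
    "j*(A*(c1-c2)^2+B*(z1-z2)^2) = (c1*c2+z1*z2-1)^2"
  shows "(j*(A-B)-1)*c1*c2 - (j*(A-B)+1)*z1*z2 = j*(A+B)-1"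
proof -
  have ne: "c1*c2+z1*z2-1 \<noteq> 0"
  proof
    assume "c1*c2+z1*z2-1 = 0"
    then have "(c1-c2)^2+(z1-z2)^2 = 0" using assms(1,2) by algebra
    then have "c1 = c2" "z1 = z2" by (simp_all add: sum_power2_eq_zero_iff)
    then show False using assms(3) by simp
  qed
  have id: "A*(c1-c2)^2+B*(z1-z2)^2 = (1-c1*c2-z1*z2)*((A+B) - (A-B)*(c1*c2-z1*z2))"
    using assms(1,2) by algebra
  have "(c1*c2+z1*z2-1) * (j*((A+B) - (A-B)*(c1*c2-z1*z2)) + (c1*c2+z1*z2-1)) = 0"
    using assms(4) unfolding id by algebra
  then have "j*((A+B) - (A-B)*(c1*c2-z1*z2)) + (c1*c2+z1*z2-1) = 0" using ne by simp
  then show ?thesis by algebra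
qed

lemma poncelet:
  fixes c1 z1 c2 z2 c3 z3 k g :: real
  assumes "c1^2+z1^2=1" "c2^2+z2^2=1" "c3^2+z3^2=1"
  "(k-1)*c1*c2 - (k+1)*z1*z2 = g"
  "(k-1)*c1*c3 - (k+1)*z1*z3 = g"
  "(k-1)*c3*c2 - (k+1)*z3*z2 = g"
  "(c1-c2)^2+(z1-z2)^2 \<noteq> 0" "(c1-c3)^2+(z1-z3)^2 \<noteq> 0" "(c3-c2)^2+(z3-z2)^2 \<noteq> 0"
  shows "k^2+2*g-1=0"
  using assms by algebra

lemma final:
  fixes A B j k g c1 z1 c2 z2 c3 z3 :: real
  assumes AB: "A > B" "B > 0" and j0: "j \<ge> 0"
    and c: "c1^2+z1^2=1" "c2^2+z2^2=1" "c3^2+z3^2=1"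
    and kd: "k = j*(A-B)" and gd: "g = j*(A+B)-1"
    and pon: "k^2+2*g-1=0"
    and det: "((k-1)*c1^2-(k+1)*z1^2-g)*((k-1)*c2^2-(k+1)*z2^2-g)*((k-1)*c3^2-(k+1)*z3^2-g)
    + g*(((k-1)*c1^2-(k+1)*z1^2-g)*((k-1)*c2^2-(k+1)*z2^2-g) + ((k-1)*c1^2-(k+1)*z1^2-g)*((k-1)*c3^2-(k+1)*z3^2-g)
     + ((k-1)*c2^2-(k+1)*z2^2-g)*((k-1)*c3^2-(k+1)*z3^2-g)) = 0"
  shows "(2*j/(c1^2/A+z1^2/B) - 1) + (2*j/(c2^2/A+z2^2/B) - 1) + (2*j/(c3^2/A+z3^2/B) - 1) - 1
     = 2*(sqrt(A^2-A*B+B^2) - B)*(A - sqrt(A^2-A*B+B^2))/(A-B)^2"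
proof -
  have A0: "A > 0" using AB by simp
  define M1 where "M1 = B*c1^2+A*z1^2"
  define M2 where "M2 = B*c2^2+A*z2^2"
  define M3 where "M3 = B*c3^2+A*z3^2"
  have Mpos: "M > 0" if "M = B*c^2+A*z^2" "c^2+z^2=1" for M c z
  proof -
    have "B*c^2+A*z^2 \<ge> B*c^2+B*z^2" using AB by (simp add: mult_right_mono)
    also have "B*c^2+B*z^2 = B" using that(2) by algebra
    finally show ?thesis using that AB by simp
  qed
  have M1p: "M1 > 0" using Mpos[OF M1_def c(1)] .
  have M2p: "M2 > 0" using Mpos[OF M2_def c(2)] .
  have M3p: "M3 > 0" using Mpos[OF M3_def c(3)] .
  have Dd: "(k-1)*c^2-(k+1)*z^2-g = -2*j*(B*c^2+A*z^2)" if "c^2+z^2=1" for c z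
    using that unfolding kd gd by algebra
  have jn: "j \<noteq> 0" using pon unfolding kd gd by auto
  have det2: "(-2*j)^3*(M1*M2*M3) + g*((-2*j)^2*(M1*M2+M1*M3+M2*M3)) = 0"
    using det unfolding Dd[OF c(1)] Dd[OF c(2)] Dd[OF c(3)] M1_def M2_def M3_def by algebra
  have det3: "(2*j)^2 * (g*(M1*M2+M1*M3+M2*M3) - 2*j*(M1*M2*M3)) = 0"
    using det2 by algebra
  have det4: "g*(M1*M2+M1*M3+M2*M3) = 2*j*(M1*M2*M3)" using det3 jn by simp
  have gn: "g \<noteq> 0" using det4 jn M1p M2p M3p by auto
  have Ni: "2*j/(c^2/A+z^2/B) = 2*j*A*B/(B*c^2+A*z^2)" for c z
    using A0 AB by (simp add: field_simps)
  have sum: "1/M1+1/M2+1/M3 = 2*j/g"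
  proof -
    have "1/M1+1/M2+1/M3 = (M1*M2+M1*M3+M2*M3)/(M1*M2*M3)" using M1p M2p M3p by (simp add: field_simps)
    also have "\<dots> = 2*j/g" using det4 gn M1p M2p M3p by (simp add: field_simps)
    finally show ?thesis .
  qed
  have "(2*j/(c1^2/A+z1^2/B) - 1) + (2*j/(c2^2/A+z2^2/B) - 1) + (2*j/(c3^2/A+z3^2/B) - 1) - 1
      = 2*j*A*B*(1/M1+1/M2+1/M3) - 4"
    unfolding Ni M1_def M2_def M3_def by (simp add: field_simps)
  also have "\<dots> = 4*j^2*A*B/g - 4" unfolding sum by (simp add: power2_eq_square)
  also have "4*j^2*A*B = g^2+4*g" using pon unfolding kd gd by algebra
  also have "(g^2+4*g)/g - 4 = g" using gn by (simp add: field_simps power2_eq_square)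
  finally have r: "(2*j/(c1^2/A+z1^2/B) - 1) + (2*j/(c2^2/A+z2^2/B) - 1) + (2*j/(c3^2/A+z3^2/B) - 1) - 1 = g" .
  define d where "d = sqrt(A^2-A*B+B^2)"
  have dpos: "A^2-A*B+B^2 \<ge> 0" using AB by (simp add: power2_eq_square)
  have d2: "d^2 = A^2-A*B+B^2" unfolding d_def using dpos by simp
  have d0: "d \<ge> 0" unfolding d_def using dpos by simp
  have q: "((A-B)^2*j + (A+B) - 2*d)*((A-B)^2*j + (A+B) + 2*d) = 0"
    using pon d2 unfolding kd gd by algebra
  have "(A-B)^2*j + (A+B) + 2*d > 0" using j0 d0 AB by (simp add: add_nonneg_pos add_pos_nonneg)
  then have "(A-B)^2*j + (A+B) - 2*d = 0" using q by simp
  then have jv: "j = (2*d - (A+B))/(A-B)^2" using AB by (simp add: field_simps)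
  have "g = 2*(d - B)*(A - d)/(A-B)^2"
    unfolding gd jv using AB d2 by (simp add: field_simps) algebra
  then show ?thesis using r unfolding d_def by simp
qed

lemma fE:
  fixes a b u h w z :: real
  assumes "a \<noteq> 0" "b \<noteq> 0" "h^2+z^2=1"
  shows "(a*u - a*h)*(a*h/a^2) + (b*w - b*z)*(b*z/b^2) = u*h + w*z - 1"
proof -
  have "(a*u - a*h)*(a*h/a^2) + (b*w - b*z)*(b*z/b^2) = u*h + w*z - (h^2+z^2)"
    using assms(1,2) by (simp add: field_simps power2_eq_square)
  then show ?thesis using assms(3) by simp
qed

lemma Nform:
  fixes a b h z :: real
  assumes "a \<noteq> 0" "b \<noteq> 0"
  shows "(a*h/a^2)^2 + (b*z/b^2)^2 = h^2/a^2 + z^2/b^2"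
  using assms by (simp add: field_simps power2_eq_square)

lemma sqrt_pos_sq:
  fixes p q :: real
  assumes "p \<noteq> 0 \<or> q \<noteq> 0"
  shows "sqrt(p^2+q^2) > 0"
proof -
  have "p^2+q^2 \<noteq> 0" using assms by (auto simp: sum_power2_eq_zero_iff)
  then have "p^2+q^2 > 0" by (simp add: add_pos_nonneg order_le_neq_trans)
  then show ?thesis by simp
qed

theorem theorem1:
  fixes a b :: real and P1 P2 P3 :: pt
  assumes "a > b" and "b > 0"
    and "billiard3 a b P1 P2 P3"
  shows "inradius P1 P2 P3 / circumradius P1 P2 P3 =
    2 * (sqrt (a^4 - a^2*b^2 + b^4) - b^2) * (a^2 - sqrt (a^4 - a^2*b^2 + b^4)) / (a^2 - b^2)^2"
proof -
  have a0: "a \<noteq> 0" and b0: "b \<noteq> 0" using assms(1,2) by auto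
  obtain x1 y1 where P1': "P1 = (x1,y1)" by (cases P1)
  obtain x2 y2 where P2': "P2 = (x2,y2)" by (cases P2)
  obtain x3 y3 where P3': "P3 = (x3,y3)" by (cases P3)
  define c1 where "c1 = x1/a"
  define c2 where "c2 = x2/a"
  define c3 where "c3 = x3/a"
  define z1 where "z1 = y1/b"
  define z2 where "z2 = y2/b"
  define z3 where "z3 = y3/b"
  have P1: "P1 = (a*c1, b*z1)" unfolding P1' c1_def z1_def using a0 b0 by simp
  have P2: "P2 = (a*c2, b*z2)" unfolding P2' c2_def z2_def using a0 b0 by simp
  have P3: "P3 = (a*c3, b*z3)" unfolding P3' c3_def z3_def using a0 b0 by simp
  have nd: "\<not> collinear {P1,P2,P3}" and el1: "on_ellipse a b P1" and el2: "on_ellipse a b P2"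
    and el3: "on_ellipse a b P3" and nb1: "normal_bisects a b P1 P2 P3"
    and nb2: "normal_bisects a b P2 P3 P1" and nb3: "normal_bisects a b P3 P1 P2"
    using assms(3) unfolding billiard3_def nondegenerate_triangle_def by auto
  have circ: "c^2+z^2 = 1" if "on_ellipse a b (a*c, b*z)" for c z
    using that a0 b0 unfolding on_ellipse_def by (simp add: power_mult_distrib)
  have C1: "c1^2+z1^2=1" using circ el1 P1 by simp
  have C2: "c2^2+z2^2=1" using circ el2 P2 by simp
  have C3: "c3^2+z3^2=1" using circ el3 P3 by simp
  define cr where "cr = (a*c2-a*c1)*(b*z3-b*z1) - (a*c3-a*c1)*(b*z2-b*z1)"
  have cr1: "cr \<noteq> 0" using noncollinear_cross nd unfolding P1 P2 P3 cr_def by blast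
  have cr2: "(a*c3-a*c2)*(b*z1-b*z2) - (a*c1-a*c2)*(b*z3-b*z2) \<noteq> 0"
  proof -
    have "(a*c3-a*c2)*(b*z1-b*z2) - (a*c1-a*c2)*(b*z3-b*z2) = cr" unfolding cr_def by algebra
    then show ?thesis using cr1 by simp
  qed
  have cr3: "(a*c1-a*c3)*(b*z2-b*z3) - (a*c2-a*c3)*(b*z1-b*z3) \<noteq> 0"
  proof -
    have "(a*c1-a*c3)*(b*z2-b*z3) - (a*c2-a*c3)*(b*z1-b*z3) = cr" unfolding cr_def by algebra
    then show ?thesis using cr1 by simp
  qed
  define D12 where "D12 = sqrt((a*c2-a*c1)^2+(b*z2-b*z1)^2)"
  define D23 where "D23 = sqrt((a*c3-a*c2)^2+(b*z3-b*z2)^2)"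
  define D31 where "D31 = sqrt((a*c3-a*c1)^2+(b*z3-b*z1)^2)"
  have D12': "sqrt((a*c1-a*c2)^2+(b*z1-b*z2)^2) = D12" unfolding D12_def by (simp add: power2_commute)
  have D23': "sqrt((a*c2-a*c3)^2+(b*z2-b*z3)^2) = D23" unfolding D23_def by (simp add: power2_commute)
  have D31': "sqrt((a*c1-a*c3)^2+(b*z1-b*z3)^2) = D31" unfolding D31_def by (simp add: power2_commute)
  note V1 = vertex_pt[OF nb1[unfolded P1 P2 P3] cr1[unfolded cr_def], folded D12_def D31_def]
  note V2 = vertex_pt[OF nb2[unfolded P1 P2 P3] cr2, folded D23_def, unfolded D12']
  note V3 = vertex_pt[OF nb3[unfolded P1 P2 P3] cr3, unfolded D31' D23']
  have D12sq: "D12^2 = a^2*(c1-c2)^2 + b^2*(z1-z2)^2"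
  proof -
    have "D12^2 = (a*c2-a*c1)^2+(b*z2-b*z1)^2" unfolding D12_def by simp
    also have "\<dots> = a^2*(c1-c2)^2 + b^2*(z1-z2)^2" by algebra
    finally show ?thesis .
  qed
  have D23sq: "D23^2 = a^2*(c3-c2)^2 + b^2*(z3-z2)^2"
  proof -
    have "D23^2 = (a*c3-a*c2)^2+(b*z3-b*z2)^2" unfolding D23_def by simp
    also have "\<dots> = a^2*(c3-c2)^2 + b^2*(z3-z2)^2" by algebra
    finally show ?thesis .
  qed
  have D31sq: "D31^2 = a^2*(c3-c1)^2 + b^2*(z3-z1)^2"
  proof -
    have "D31^2 = (a*c3-a*c1)^2+(b*z3-b*z1)^2" unfolding D31_def by simp
    also have "\<dots> = a^2*(c3-c1)^2 + b^2*(z3-z1)^2" by algebra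
    finally show ?thesis .
  qed
  have D12p: "D12 > 0" unfolding D12_def by (rule sqrt_pos_sq) (use cr1 in \<open>auto simp: cr_def\<close>)
  have D23p: "D23 > 0" unfolding D23_def by (rule sqrt_pos_sq) (use cr2 in \<open>auto\<close>)
  have D31p: "D31 > 0" unfolding D31_def by (rule sqrt_pos_sq) (use cr1 in \<open>auto simp: cr_def\<close>)
  have f12: "(a*c2 - a*c1)*(a*c1/a^2) + (b*z2 - b*z1)*(b*z1/b^2) = c1*c2+z1*z2-1"
    using fE[OF a0 b0 C1, of c2 z2] by (simp add: mult.commute)
  have f13: "(a*c3 - a*c1)*(a*c1/a^2) + (b*z3 - b*z1)*(b*z1/b^2) = c1*c3+z1*z3-1"
    using fE[OF a0 b0 C1, of c3 z3] by (simp add: mult.commute)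
  have f23: "(a*c3 - a*c2)*(a*c2/a^2) + (b*z3 - b*z2)*(b*z2/b^2) = c2*c3+z2*z3-1"
    using fE[OF a0 b0 C2, of c3 z3] by (simp add: mult.commute)
  have f21: "(a*c1 - a*c2)*(a*c2/a^2) + (b*z1 - b*z2)*(b*z2/b^2) = c1*c2+z1*z2-1"
    using fE[OF a0 b0 C2, of c1 z1] by (simp add: mult.commute)
  have f31: "(a*c1 - a*c3)*(a*c3/a^2) + (b*z1 - b*z3)*(b*z3/b^2) = c1*c3+z1*z3-1"
    using fE[OF a0 b0 C3, of c1 z1] by (simp add: mult.commute)
  define m where "m = (c1*c2+z1*z2-1)/D12"
  define j where "j = m^2"
  have m13: "(c1*c3+z1*z3-1)/D31 = m" using V1(1) unfolding f12 f13 m_def by simp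
  have m23: "(c2*c3+z2*z3-1)/D23 = m" using V2(1) unfolding f23 f21 m_def by simp
  have N: "(a*c/a^2)^2 + (b*z/b^2)^2 = c^2/a^2 + z^2/b^2" for c z using Nform[OF a0 b0] .
  have cos1: "((a*c2-a*c1)*(a*c3-a*c1)+(b*z2-b*z1)*(b*z3-b*z1))/(D12*D31) = 2*j/(c1^2/a^2+z1^2/b^2) - 1"
    using V1(2) unfolding f12 N j_def m_def by simp
  have cos2: "((a*c3-a*c2)*(a*c1-a*c2)+(b*z3-b*z2)*(b*z1-b*z2))/(D12*D23) = 2*j/(c2^2/a^2+z2^2/b^2) - 1"
    using V2(2) unfolding f23 N j_def m23 by (simp add: mult.commute)
  have cos3: "((a*c1-a*c3)*(a*c2-a*c3)+(b*z1-b*z3)*(b*z2-b*z3))/(D23*D31) = 2*j/(c3^2/a^2+z3^2/b^2) - 1"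
    using V3(2) unfolding f31 N j_def m13 by (simp add: mult.commute)
  have dist12: "dist P1 P2 = D12" unfolding P1 P2 D12_def by (simp add: dist_Pair_Pair dist_real_def power2_commute)
  have dist23: "dist P2 P3 = D23" unfolding P3 P2 D23_def by (simp add: dist_Pair_Pair dist_real_def power2_commute)
  have dist31: "dist P3 P1 = D31" unfolding P1 P3 D31_def by (simp add: dist_Pair_Pair dist_real_def)
  have ratio: "inradius P1 P2 P3 / circumradius P1 P2 P3 =
     (2*j/(c1^2/a^2+z1^2/b^2) - 1) + (2*j/(c2^2/a^2+z2^2/b^2) - 1) + (2*j/(c3^2/a^2+z3^2/b^2) - 1) - 1"
  proof -
    have ta: "tri_area P1 P2 P3 = \<bar>cr\<bar>/2" unfolding tri_area_def P1 P2 P3 cr_def by simp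
    have d1: "(a*c2-a*c1)*(a*c3-a*c1)+(b*z2-b*z1)*(b*z3-b*z1) = (D12^2+D31^2-D23^2)/2"
      unfolding D12sq D23sq D31sq by algebra
    have d2: "(a*c3-a*c2)*(a*c1-a*c2)+(b*z3-b*z2)*(b*z1-b*z2) = (D12^2+D23^2-D31^2)/2"
      unfolding D12sq D23sq D31sq by algebra
    have d3: "(a*c1-a*c3)*(a*c2-a*c3)+(b*z1-b*z3)*(b*z2-b*z3) = (D23^2+D31^2-D12^2)/2"
      unfolding D12sq D23sq D31sq by algebra
    have her: "4*cr^2 = (D12+D23+D31)*(-D12+D23+D31)*(D12-D23+D31)*(D12+D23-D31)"
    proof -
      have "(D12+D23+D31)*(-D12+D23+D31)*(D12-D23+D31)*(D12+D23-D31)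
         = 2*D12^2*D23^2 + 2*D23^2*D31^2 + 2*D31^2*D12^2 - (D12^2)^2 - (D23^2)^2 - (D31^2)^2"
        by algebra
      also have "\<dots> = 4*cr^2" unfolding D12sq D23sq D31sq cr_def by algebra
      finally show ?thesis by simp
    qed
    have "inradius P1 P2 P3 / circumradius P1 P2 P3 =
      (2*(\<bar>cr\<bar>/2)/(D12+D23+D31)) / (D12*D23*D31/(4*(\<bar>cr\<bar>/2)))"
      unfolding inradius_def circumradius_def ta dist12 dist23 dist31 by simp
    also have "\<dots> = ((a*c2-a*c1)*(a*c3-a*c1)+(b*z2-b*z1)*(b*z3-b*z1))/(D12*D31)
       + ((a*c3-a*c2)*(a*c1-a*c2)+(b*z3-b*z2)*(b*z1-b*z2))/(D12*D23)
       + ((a*c1-a*c3)*(a*c2-a*c3)+(b*z1-b*z3)*(b*z2-b*z3))/(D23*D31) - 1"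
      by (rule tri_ratio[OF D12p D23p D31p d1 d2 d3 her cr1])
    finally show ?thesis unfolding cos1 cos2 cos3 .
  qed
  define k where "k = j*(a^2-b^2)"
  define g where "g = j*(a^2+b^2)-1"
  have jd: "j*(a^2*(c1-c2)^2+b^2*(z1-z2)^2) = (c1*c2+z1*z2-1)^2"
    unfolding j_def m_def D12sq[symmetric] using D12p by (simp add: power_divide)
  have jd13: "j*(a^2*(c1-c3)^2+b^2*(z1-z3)^2) = (c1*c3+z1*z3-1)^2"
  proof -
    have "j*(a^2*(c1-c3)^2+b^2*(z1-z3)^2) = j*D31^2" unfolding D31sq by (simp add: power2_commute)
    also have "\<dots> = (c1*c3+z1*z3-1)^2" unfolding j_def m13[symmetric] using D31p by (simp add: power_divide)
    finally show ?thesis .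
  qed
  have jd32: "j*(a^2*(c3-c2)^2+b^2*(z3-z2)^2) = (c3*c2+z3*z2-1)^2"
  proof -
    have "j*(a^2*(c3-c2)^2+b^2*(z3-z2)^2) = j*D23^2" unfolding D23sq by simp
    also have "\<dots> = (c2*c3+z2*z3-1)^2" unfolding j_def m23[symmetric] using D23p by (simp add: power_divide)
    finally show ?thesis by (simp add: mult.commute)
  qed
  have ne12: "(c1,z1) \<noteq> (c2,z2)" using cr1 unfolding cr_def by auto
  have ne13: "(c1,z1) \<noteq> (c3,z3)" using cr1 unfolding cr_def by auto
  have ne32: "(c3,z3) \<noteq> (c2,z2)" using cr1 unfolding cr_def by auto
  have p12: "(k-1)*c1*c2 - (k+1)*z1*z2 = g" using pair[OF C1 C2 ne12 jd] unfolding k_def g_def .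
  have p13: "(k-1)*c1*c3 - (k+1)*z1*z3 = g" using pair[OF C1 C3 ne13 jd13] unfolding k_def g_def .
  have p32: "(k-1)*c3*c2 - (k+1)*z3*z2 = g" using pair[OF C3 C2 ne32 jd32] unfolding k_def g_def .
  have dn: "(c1-c2)^2+(z1-z2)^2 \<noteq> 0" "(c1-c3)^2+(z1-z3)^2 \<noteq> 0" "(c3-c2)^2+(z3-z2)^2 \<noteq> 0"
    using ne12 ne13 ne32 by (auto simp: sum_power2_eq_zero_iff)
  have pon: "k^2+2*g-1=0" using poncelet[OF C1 C2 C3 p12 p13 p32 dn] .
  note dt = det3[OF p12 p13 p32]
  have ab2: "a^2 > b^2" using assms(1,2) by (simp add: power_strict_mono)
  have b2: "b^2 > 0" using assms(2) by simp
  have j0: "j \<ge> 0" unfolding j_def by simp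
  note fin = final[OF ab2 b2 j0 C1 C2 C3 k_def g_def pon dt]
  have a4: "a^4 = (a^2)^2" "b^4 = (b^2)^2" by simp_all
  show ?thesis unfolding ratio using fin unfolding a4 by simp
qed

end
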